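(* For every integer $n\ge1$ and every $f\in\mathcal{E}_n^-$, $$\int_0^\infty |f(t)|^2e^{-t}\,dt \le \left(1+8190\,e^{-n/10}\right)\int_0^{9n}|f(t)|^2e^{-t}\,dt.$$ In particular this holds for every $f\in\mathcal{T}_n$.
   Context: $\mathcal{E}_n^-$ denotes the set of all functions $f(t)=\sum_{j=1}^n a_j e^{\lambda_j t}$ ($t\in\mathbb{R}$) with $a_j,\lambda_j\in\mathbb{C}$ and $\mathrm{Re}(\lambda_j)\le 0$ for all $j$. $\mathcal{T}_n$ denotes the set of all functions $f(t)=\sum_{j=1}^n a_j e^{i\lambda_j t}$ with $a_j\in\mathbb{C}$ (possibly zero) and real $\lambda_1<\cdots<\lambda_n$. *)

theory Defs
  imports "HOL-Analysis.Analysis"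
begin

text \<open>The class E_n^-: exponential sums with n terms whose exponents have
  nonpositive real part (indices 0..n-1 instead of 1..n).\<close>
definition E_minus :: "nat \<Rightarrow> (real \<Rightarrow> complex) set" where
  "E_minus n = {f. \<exists>(a::nat \<Rightarrow> complex) (lam::nat \<Rightarrow> complex).
      (\<forall>j<n. Re (lam j) \<le> 0) \<and>
      f = (\<lambda>t. \<Sum>j<n. a j * exp (lam j * complex_of_real t))}"

definition T_class :: "nat \<Rightarrow> (real \<Rightarrow> complex) set" where
  "T_class n = {f. \<exists>(a::nat \<Rightarrow> complex) (lam::nat \<Rightarrow> real).
      strict_mono_on {..<n} lam \<and>
      f = (\<lambda>t. \<Sum>j<n. a j * exp (\<i> * complex_of_real (lam j) * complex_of_real t))}"

end

theory Submission
  imports Defs "HOL-Computational_Algebra.Formal_Power_Series"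
begin


definition geo :: "complex \<Rightarrow> complex fps" where "geo c = Abs_fps (\<lambda>k. c ^ k)"

lemma geo_inv: "(1 - fps_const c * fps_X) * geo c = 1"
proof (rule fps_ext)
  fix k
  have "fps_nth ((1 - fps_const c * fps_X) * geo c) k = fps_nth (geo c) k - c * fps_nth (fps_X * geo c) k"
    by (simp add: algebra_simps mult.assoc)
  also have "\<dots> = fps_nth (1::complex fps) k"
    by (cases k) (auto simp: geo_def)
  finally show "fps_nth ((1 - fps_const c * fps_X) * geo c) k = fps_nth (1::complex fps) k" .
qed

lemma lin_prod_nth:
  "finite A \<Longrightarrow> card A < k \<Longrightarrow> fps_nth (\<Prod>i\<in>A. 1 - fps_const (\<rho> i) * fps_X) k = (0::complex)"
proof (induction A arbitrary: k rule: finite_induct)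
  case empty
  then show ?case by simp
next
  case (insert x F)
  let ?Q = "\<Prod>i\<in>F. 1 - fps_const (\<rho> i) * fps_X"
  have "(\<Prod>i\<in>insert x F. 1 - fps_const (\<rho> i) * fps_X) = (1 - fps_const (\<rho> x) * fps_X) * ?Q"
    using insert by simp
  also have "fps_nth \<dots> k = fps_nth ?Q k - \<rho> x * fps_nth (fps_X * ?Q) k"
    by (simp add: algebra_simps mult.assoc)
  also have "\<dots> = 0"
    using insert by (cases k) auto
  finally show ?case .
qed

definition maj :: "complex fps \<Rightarrow> real fps \<Rightarrow> bool" where
  "maj a A \<longleftrightarrow> (\<forall>k. norm (fps_nth a k) \<le> fps_nth A k)"

lemma maj_nonneg: "maj a A \<Longrightarrow> 0 \<le> fps_nth A k"
  unfolding maj_def by (meson norm_ge_zero order_trans)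

lemma maj_mult: assumes "maj a A" "maj b B" shows "maj (a * b) (A * B)"
  unfolding maj_def
proof
  fix k
  have "norm (fps_nth (a*b) k) = norm (\<Sum>i=0..k. fps_nth a i * fps_nth b (k-i))" by (simp add: fps_mult_nth)
  also have "\<dots> \<le> (\<Sum>i=0..k. norm (fps_nth a i) * norm (fps_nth b (k-i)))"
    by (rule order_trans[OF norm_sum]) (simp add: norm_mult)
  also have "\<dots> \<le> (\<Sum>i=0..k. fps_nth A i * fps_nth B (k-i))"
    using assms unfolding maj_def
    by (intro sum_mono mult_mono) (auto intro: order_trans[OF norm_ge_zero])
  also have "\<dots> = fps_nth (A*B) k" by (simp add: fps_mult_nth)
  finally show "norm (fps_nth (a*b) k) \<le> fps_nth (A*B) k" .
qed

lemma maj_one: "maj 1 1"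
  unfolding maj_def by (simp add: fps_one_nth)

lemma maj_prod: "(\<And>j. j \<in> S \<Longrightarrow> maj (a j) (A j)) \<Longrightarrow> maj (\<Prod>j\<in>S. a j) (\<Prod>j\<in>S. A j)"
proof (induction S rule: infinite_finite_induct)
  case (insert x F) then show ?case by (simp add: maj_mult)
qed (auto simp: maj_one)

lemma maj_lin: "norm c \<le> r \<Longrightarrow> maj (1 - fps_const c * fps_X) (1 + fps_const r * fps_X)"
  unfolding maj_def
proof
  fix k assume "norm c \<le> r"
  then show "norm (fps_nth (1 - fps_const c * fps_X) k) \<le> fps_nth (1 + fps_const r * fps_X) k"
    by (cases "k = 0"; cases "k = 1") (auto simp: fps_X_nth)
qed

definition rgeo :: "real \<Rightarrow> real fps" where "rgeo c = Abs_fps (\<lambda>k. c ^ k)"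

lemma maj_geo: "norm c \<le> r \<Longrightarrow> maj (geo c) (rgeo r)"
  unfolding maj_def geo_def rgeo_def by (auto simp: norm_power power_mono)




definition ev :: "nat \<Rightarrow> real \<Rightarrow> real fps \<Rightarrow> real" where
  "ev N s A = (\<Sum>j\<le>N. fps_nth A j * s ^ j)"

definition nonneg :: "real fps \<Rightarrow> bool" where "nonneg A \<longleftrightarrow> (\<forall>j. 0 \<le> fps_nth A j)"

lemma nonneg_mult: "nonneg A \<Longrightarrow> nonneg B \<Longrightarrow> nonneg (A * B)"
  unfolding nonneg_def by (auto simp: fps_mult_nth intro!: sum_nonneg)

lemma nonneg_power: assumes "nonneg A" shows "nonneg (A ^ n)"
proof (induction n)
  case 0 show ?case by (simp add: nonneg_def fps_one_nth)
next
  case (Suc n) then show ?case by (simp add: nonneg_mult[OF assms])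
qed

lemma ev_nonneg: "nonneg A \<Longrightarrow> 0 \<le> s \<Longrightarrow> 0 \<le> ev N s A"
  unfolding ev_def nonneg_def by (auto intro!: sum_nonneg)

lemma ev_mult:
  assumes A: "nonneg A" and B: "nonneg B" and s: "0 \<le> s"
  shows "ev N s (A * B) \<le> ev N s A * ev N s B"
proof -
  let ?a = "\<lambda>i. fps_nth A i * s ^ i" and ?b = "\<lambda>j. fps_nth B j * s ^ j"
  have "ev N s (A * B) = (\<Sum>k\<le>N. \<Sum>i\<le>k. ?a i * ?b (k - i))"
    unfolding ev_def fps_mult_nth atLeast0AtMost
    by (intro sum.cong refl) (auto simp: sum_distrib_right power_add[symmetric] intro!: sum.cong)
  also have "\<dots> = (\<Sum>(i,j)\<in>{(i,j). i+j \<le> N}. ?a i * ?b j)"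
    by (rule sum.triangle_reindex_eq[symmetric])
  also have "\<dots> \<le> (\<Sum>(i,j)\<in>{..N} \<times> {..N}. ?a i * ?b j)"
    using A B s unfolding nonneg_def
    by (intro sum_mono2) (auto intro!: mult_nonneg_nonneg)
  also have "\<dots> = ev N s A * ev N s B"
    unfolding ev_def by (simp add: sum_product sum.cartesian_product)
  finally show ?thesis .
qed

lemma ev_power:
  assumes A: "nonneg A" and s: "0 \<le> s"
  shows "ev N s (A ^ n) \<le> (ev N s A) ^ n"
proof (induction n)
  case 0
  then show ?case by (induction N) (auto simp: ev_def fps_one_nth)
next
  case (Suc n)
  have "ev N s (A ^ Suc n) \<le> ev N s A * ev N s (A ^ n)"
    using ev_mult[OF A nonneg_power[OF A] s] by simp
  also have "\<dots> \<le> ev N s A * (ev N s A) ^ n"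
    using Suc ev_nonneg[OF A s] by (intro mult_left_mono) auto
  finally show ?case by simp
qed

lemma ev_lin: "ev N s (1 + fps_const r * fps_X) = (if N = 0 then 1 else 1 + r * s)"
  by (induction N) (auto simp: ev_def fps_X_nth)

lemma geom_le: assumes "0 \<le> x" "x < (1::real)" shows "(\<Sum>j\<le>N. x ^ j) \<le> 1 / (1 - x)"
proof -
  have "(\<Sum>j\<le>N. x ^ j) = (\<Sum>j<Suc N. x ^ j)" by (simp add: lessThan_Suc_atMost)
  also have "\<dots> = (1 - x ^ Suc N) / (1 - x)" using assms by (metis less_irrefl sum_gp_strict)
  also have "\<dots> \<le> 1 / (1 - x)" using assms by (intro divide_right_mono) auto
  finally show ?thesis .
qed

lemma ev_rgeo: assumes "0 \<le> r" "0 \<le> s" "r * s < 1" shows "ev N s (rgeo r) \<le> 1 / (1 - r * s)"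
  unfolding ev_def rgeo_def using geom_le[of "r * s" N] assms by (simp add: power_mult_distrib)

lemma W_bound:
  assumes r: "0 \<le> r" and s: "0 < s" and rs: "r * s < 1"
  shows "fps_nth (((1 + fps_const r * fps_X) * rgeo r) ^ n) j \<le> ((1 + r * s) / (1 - r * s)) ^ n / s ^ j"
proof -
  let ?V = "(1 + fps_const r * fps_X) * rgeo r"
  have nV1: "nonneg (1 + fps_const r * fps_X)" using r unfolding nonneg_def by (auto simp: fps_X_nth)
  have nV2: "nonneg (rgeo r)" using r unfolding nonneg_def rgeo_def by auto
  have nV: "nonneg ?V" by (rule nonneg_mult[OF nV1 nV2])
  have "fps_nth (?V ^ n) j * s ^ j \<le> ev j s (?V ^ n)"
    unfolding ev_def using nonneg_power[OF nV, of n] s unfolding nonneg_def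
    by (intro member_le_sum) auto
  also have "\<dots> \<le> (ev j s ?V) ^ n" using ev_power[OF nV] s by auto
  also have "\<dots> \<le> ((1 + r * s) / (1 - r * s)) ^ n"
  proof (rule power_mono)
    have "ev j s ?V \<le> ev j s (1 + fps_const r * fps_X) * ev j s (rgeo r)"
      using ev_mult[OF nV1 nV2] s by auto
    also have "\<dots> \<le> (1 + r * s) * (1 / (1 - r * s))"
      using ev_rgeo[OF r _ rs, of j] s r rs ev_nonneg[OF nV2, of s j]
      by (intro mult_mono) (auto simp: ev_lin)
    finally show "ev j s ?V \<le> (1 + r * s) / (1 - r * s)" by simp
    show "0 \<le> ev j s ?V" using ev_nonneg[OF nV] s by auto
  qed
  finally have "fps_nth (?V ^ n) j * s ^ j \<le> ((1 + r * s) / (1 - r * s)) ^ n" .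
  then show ?thesis using s by (metis pos_le_divide_eq zero_less_power)
qed




lemma scalar:
  fixes c \<rho> :: "nat \<Rightarrow> complex" and n k :: nat and r s :: real
  assumes \<rho>: "\<And>j. j < n \<Longrightarrow> norm (\<rho> j) \<le> r" and r: "0 \<le> r" and s: "0 < s" and rs: "r * s < 1"
    and nk: "n \<le> k"
  shows "norm (\<Sum>j<n. c j * \<rho> j ^ k)
     \<le> (\<Sum>i<n. norm (\<Sum>j<n. c j * \<rho> j ^ i) * (((1 + r * s) / (1 - r * s)) ^ n / s ^ (k - i)))"
proof -
  define u where "u = (\<lambda>k. \<Sum>j<n. c j * \<rho> j ^ k)"
  define U where "U = Abs_fps u"
  define P where "P = (\<Prod>j<n. 1 - fps_const (\<rho> j) * fps_X)"
  define G where "G = (\<Prod>j<n. geo (\<rho> j))"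
  define Uh where "Uh = Abs_fps (\<lambda>l. if l < n then u l else 0)"
  define H where "H = Abs_fps (\<lambda>l. if l < n then norm (u l) else 0)"
  define E where "E = (1 + fps_const r * fps_X) ^ n"
  define Gr where "Gr = rgeo r ^ n"
  define W where "W = ((1 + fps_const r * fps_X) * rgeo r) ^ n"
  define F where "F = ((1 + r * s) / (1 - r * s)) ^ n"
  have hU: "U = (\<Sum>j<n. fps_const (c j) * geo (\<rho> j))"
    by (rule fps_ext) (simp add: U_def u_def geo_def fps_sum_nth)
  have PG: "P * G = 1"
    unfolding P_def G_def by (simp add: prod.distrib[symmetric] geo_inv)
  have Pgeo: "fps_nth (P * geo (\<rho> j)) k' = 0" if "j < n" "n \<le> k'" for j k'
  proof -
    have "P = (1 - fps_const (\<rho> j) * fps_X) * (\<Prod>i\<in>{..<n} - {j}. 1 - fps_const (\<rho> i) * fps_X)"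
      unfolding P_def using that by (simp add: prod.remove)
    then have "P * geo (\<rho> j) = (\<Prod>i\<in>{..<n} - {j}. 1 - fps_const (\<rho> i) * fps_X)"
      by (simp add: ac_simps geo_inv[simplified ac_simps])
    moreover have "card ({..<n} - {j}) < k'" using that by simp
    ultimately show ?thesis by (simp add: lin_prod_nth)
  qed
  have PU_high: "fps_nth (P * U) k' = 0" if "n \<le> k'" for k'
  proof -
    have "P * U = (\<Sum>j<n. fps_const (c j) * (P * geo (\<rho> j)))"
      unfolding hU by (simp add: sum_distrib_left ac_simps)
    then show ?thesis using Pgeo that by (simp add: fps_sum_nth)
  qed
  have UG: "U = (P * U) * G"
    by (metis PG mult.commute mult.left_commute mult_1_right)
  have PU_low: "fps_nth (P * U) k' = fps_nth (P * Uh) k'" if "k' < n" for k'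
    unfolding fps_mult_nth using that by (intro sum.cong refl) (auto simp: U_def Uh_def)
  have majP: "maj P E"
  proof -
    have "maj P (\<Prod>j<n. 1 + fps_const r * fps_X)"
      unfolding P_def using \<rho> by (intro maj_prod maj_lin) auto
    then show ?thesis by (simp add: E_def)
  qed
  have majG: "maj G Gr"
  proof -
    have "maj G (\<Prod>j<n. rgeo r)"
      unfolding G_def using \<rho> by (intro maj_prod maj_geo) auto
    then show ?thesis by (simp add: Gr_def)
  qed
  have majUh: "maj Uh H" unfolding maj_def Uh_def H_def by auto
  have majR: "maj (P * U) (E * H)"
    unfolding maj_def
  proof
    fix k'
    show "norm (fps_nth (P * U) k') \<le> fps_nth (E * H) k'"
    proof (cases "k' < n")
      case True
      then show ?thesis using maj_mult[OF majP majUh] unfolding maj_def by (simp add: PU_low)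
    next
      case False
      then show ?thesis using maj_nonneg[OF maj_mult[OF majP majUh]] by (simp add: PU_high)
    qed
  qed
  have majU: "maj U (H * W)"
  proof -
    have "maj U (E * H * Gr)" using maj_mult[OF majR majG] UG by simp
    moreover have "E * H * Gr = H * W" unfolding E_def Gr_def W_def by (simp add: power_mult_distrib ac_simps)
    ultimately show ?thesis by simp
  qed
  have "norm (u k) \<le> fps_nth (H * W) k" using majU unfolding maj_def U_def by simp
  also have "\<dots> = (\<Sum>i<n. norm (u i) * fps_nth W (k - i))"
    unfolding fps_mult_nth
    by (rule sum.mono_neutral_cong_right) (use nk in \<open>auto simp: H_def\<close>)
  also have "\<dots> \<le> (\<Sum>i<n. norm (u i) * (F / s ^ (k - i)))"
    unfolding W_def F_def by (intro sum_mono mult_left_mono W_bound r s rs) auto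
  finally show ?thesis unfolding u_def F_def .
qed




lemma exp_half_bound: "exp (-(1/2::real)) \<le> 8/13"
proof -
  have "13/8 \<le> exp (1/2::real)" using exp_lower_Taylor_quadratic[of "1/2"] by (simp add: power2_eq_square)
  then have "1 / exp (1/2::real) \<le> 8/13" by (simp add: field_simps)
  then show ?thesis by (simp add: exp_minus field_simps)
qed

lemma ident:
  fixes a lam :: "nat \<Rightarrow> complex" and t :: real and m :: nat
  shows "(cmod (\<Sum>j<n. a j * exp (lam j * complex_of_real (real m + t))))\<^sup>2 * exp (-(real m + t))
     = (norm (\<Sum>j<n. (a j * exp ((lam j - 1/2) * complex_of_real t)) * exp (lam j - 1/2) ^ m))\<^sup>2"
proof -
  have e: "exp (lam j * complex_of_real (real m + t)) * complex_of_real (exp (-(real m + t)/2))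
        = exp ((lam j - 1/2) * complex_of_real t) * exp (lam j - 1/2) ^ m" for j
  proof -
    have "exp (lam j * complex_of_real (real m + t)) * complex_of_real (exp (-(real m + t)/2))
       = exp (lam j * complex_of_real (real m + t) + complex_of_real (-(real m + t)/2))"
      by (simp add: exp_add flip: exp_of_real)
    also have "lam j * complex_of_real (real m + t) + complex_of_real (-(real m + t)/2)
        = (lam j - 1/2) * complex_of_real t + of_nat m * (lam j - 1/2)"
      by (simp add: algebra_simps add_divide_distrib diff_divide_distrib)
    also have "exp \<dots> = exp ((lam j - 1/2) * complex_of_real t) * exp (lam j - 1/2) ^ m"
      by (simp add: exp_add exp_of_nat_mult)
    finally show ?thesis .
  qed
  have "(\<Sum>j<n. a j * exp (lam j * complex_of_real (real m + t))) * complex_of_real (exp (-(real m + t)/2))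
      = (\<Sum>j<n. (a j * exp ((lam j - 1/2) * complex_of_real t)) * exp (lam j - 1/2) ^ m)"
    by (simp add: sum_distrib_right e[symmetric] mult.assoc)
  moreover have "(cmod (\<Sum>j<n. a j * exp (lam j * complex_of_real (real m + t))))\<^sup>2 * exp (-(real m + t))
     = (cmod ((\<Sum>j<n. a j * exp (lam j * complex_of_real (real m + t))) * complex_of_real (exp (-(real m + t)/2))))\<^sup>2"
  proof -
    have "exp (-(real m + t)) = (exp (-(real m + t)/2))\<^sup>2"
      by (simp add: power2_eq_square exp_add[symmetric])
    then show ?thesis by (simp add: norm_mult power_mult_distrib)
  qed
  ultimately show ?thesis by simp
qed

lemma pointwise:
  fixes a lam :: "nat \<Rightarrow> complex" and t :: real
  assumes lam: "\<forall>j<n. Re (lam j) \<le> 0" and nk: "n \<le> k"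
  shows "(cmod (\<Sum>j<n. a j * exp (lam j * complex_of_real (real k + t))))\<^sup>2 * exp (-(real k + t))
    \<le> ((121/9)^n)\<^sup>2 * (\<Sum>i<n. ((7/5::real)^i)\<^sup>2) / ((7/5)^k)\<^sup>2 *
       (\<Sum>i<n. (cmod (\<Sum>j<n. a j * exp (lam j * complex_of_real (real i + t))))\<^sup>2 * exp (-(real i + t)))"
proof -
  define c where "c = (\<lambda>j. a j * exp ((lam j - 1/2) * complex_of_real t))"
  define \<rho> where "\<rho> = (\<lambda>j. exp (lam j - 1/2))"
  define u where "u = (\<lambda>k. \<Sum>j<n. c j * \<rho> j ^ k)"
  define s :: real where "s = 7/5"
  define F :: real where "F = (121/9)^n"
  have hu: "\<And>m. (cmod (\<Sum>j<n. a j * exp (lam j * complex_of_real (real m + t))))\<^sup>2 * exp (-(real m + t)) = (norm (u m))\<^sup>2"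
    unfolding u_def c_def \<rho>_def by (rule ident)
  have \<rho>b: "norm (\<rho> j) \<le> 8/13" if "j < n" for j
  proof -
    have "norm (\<rho> j) = exp (Re (lam j) - 1/2)" by (simp add: \<rho>_def)
    also have "\<dots> \<le> exp (-(1/2))" using lam that by simp
    also have "\<dots> \<le> 8/13" by (rule exp_half_bound)
    finally show ?thesis .
  qed
  have sc: "norm (u k) \<le> (\<Sum>i<n. norm (u i) * (((1 + 8/13 * s) / (1 - 8/13 * s)) ^ n / s ^ (k - i)))"
    unfolding u_def by (rule scalar) (use \<rho>b nk in \<open>auto simp: s_def\<close>)
  have Fe: "((1 + 8/13 * s) / (1 - 8/13 * s)) ^ n = F" by (simp add: s_def F_def)
  have "(\<Sum>i<n. norm (u i) * (F / s ^ (k - i))) = F / s ^ k * (\<Sum>i<n. norm (u i) * s ^ i)"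
    unfolding sum_distrib_left
  proof (intro sum.cong refl)
    fix i assume "i \<in> {..<n}"
    then have "i \<le> k" using nk by auto
    then show "norm (u i) * (F / s ^ (k - i)) = F / s ^ k * (norm (u i) * s ^ i)"
      by (simp add: power_diff s_def field_simps)
  qed
  with sc Fe have b1: "norm (u k) \<le> F / s ^ k * (\<Sum>i<n. norm (u i) * s ^ i)" by simp
  have "(norm (u k))\<^sup>2 \<le> (F / s ^ k * (\<Sum>i<n. norm (u i) * s ^ i))\<^sup>2"
    by (rule power_mono[OF b1 norm_ge_zero])
  also have "\<dots> = (F / s ^ k)\<^sup>2 * (\<Sum>i<n. norm (u i) * s ^ i)\<^sup>2" by (simp add: power_divide power_mult_distrib field_simps)
  also have "\<dots> \<le> (F / s ^ k)\<^sup>2 * ((\<Sum>i<n. (norm (u i))\<^sup>2) * (\<Sum>i<n. (s ^ i)\<^sup>2))"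
    by (intro mult_left_mono Cauchy_Schwarz_ineq_sum) auto
  also have "\<dots> = F\<^sup>2 * (\<Sum>i<n. (s ^ i)\<^sup>2) / (s ^ k)\<^sup>2 * (\<Sum>i<n. (norm (u i))\<^sup>2)"
    by (simp add: power_divide field_simps)
  finally show ?thesis unfolding hu F_def s_def by simp
qed




lemma geom_tail: assumes "0 \<le> x" "x < (1::real)"
  shows "(\<Sum>k\<in>{m..<N}. x ^ k) \<le> x ^ m / (1 - x)"
proof (cases "m \<le> N")
  case True
  have "m \<le> N \<longrightarrow> (\<Sum>k\<in>{m..<N}. x ^ k) = (x ^ m - x ^ N) / (1 - x)" for N
  proof (induction N)
    case 0 then show ?case by auto
  next
    case (Suc N)
    show ?case
    proof
      assume "m \<le> Suc N"
      show "(\<Sum>k\<in>{m..<Suc N}. x ^ k) = (x ^ m - x ^ Suc N) / (1 - x)"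
      proof (cases "m = Suc N")
        case True then show ?thesis by simp
      next
        case False
        then have "m \<le> N" using \<open>m \<le> Suc N\<close> by simp
        then have "(\<Sum>k\<in>{m..<Suc N}. x ^ k) = (x ^ m - x ^ N) / (1 - x) + x ^ N"
          using Suc by simp
        also have "\<dots> = (x ^ m - x ^ Suc N) / (1 - x)" using assms by (simp add: field_simps)
        finally show ?thesis .
      qed
    qed
  qed
  with True have "(\<Sum>k\<in>{m..<N}. x ^ k) = (x ^ m - x ^ N) / (1 - x)" by blast
  also have "\<dots> \<le> x ^ m / (1 - x)" using assms by (intro divide_right_mono) auto
  finally show ?thesis .
next
  case False then show ?thesis using assms by simp
qed

lemma numeric:
  "(\<Sum>k\<in>{9*n..<N}. ((121/9)^n)\<^sup>2 * (\<Sum>i<n. ((7/5::real)^i)\<^sup>2) / ((7/5)^k)\<^sup>2)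
     \<le> 8190 * exp (- real n / 10)"
proof -
  have S2: "(\<Sum>i<n. ((7/5::real)^i)\<^sup>2) \<le> (49/25)^n * (25/24)"
  proof -
    have "(\<Sum>i<n. ((7/5::real)^i)\<^sup>2) = (\<Sum>i<n. (49/25::real)^i)"
      by (simp add: power_even_eq[symmetric] power_mult[symmetric] mult.commute power2_eq_square power_mult_distrib[symmetric])
    also have "\<dots> = (1 - (49/25)^n) / (1 - 49/25)" by (subst sum_gp_strict) simp
    also have "\<dots> \<le> (49/25)^n * (25/24)" by (simp add: field_simps)
    finally show ?thesis .
  qed
  have T: "(\<Sum>k\<in>{9*n..<N}. 1 / ((7/5::real)^k)\<^sup>2) \<le> (25/49)^(9*n) * (49/24)"
  proof -
    have "(\<Sum>k\<in>{9*n..<N}. 1 / ((7/5::real)^k)\<^sup>2) = (\<Sum>k\<in>{9*n..<N}. (25/49::real)^k)"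
      by (intro sum.cong refl) (simp add: power2_eq_square power_mult_distrib[symmetric] power_one_over[symmetric])
    also have "\<dots> \<le> (25/49)^(9*n) / (1 - 25/49)" by (rule geom_tail) auto
    also have "\<dots> = (25/49)^(9*n) * (49/24)" by simp
    finally show ?thesis .
  qed
  have "(\<Sum>k\<in>{9*n..<N}. ((121/9)^n)\<^sup>2 * (\<Sum>i<n. ((7/5::real)^i)\<^sup>2) / ((7/5)^k)\<^sup>2)
      = ((121/9)^n)\<^sup>2 * (\<Sum>i<n. ((7/5::real)^i)\<^sup>2) * (\<Sum>k\<in>{9*n..<N}. 1 / ((7/5::real)^k)\<^sup>2)"
    by (simp add: sum_distrib_left)
  also have "\<dots> \<le> ((121/9)^n)\<^sup>2 * ((49/25)^n * (25/24)) * ((25/49)^(9*n) * (49/24))"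
    using S2 T by (intro mult_mono) (auto intro!: sum_nonneg)
  also have "\<dots> = (14641/81 * (25/49)^8) ^ n * (1225/576)"
  proof -
    have A: "((121/9::real)^n)\<^sup>2 = (14641/81)^n" by (simp add: power2_eq_square power_mult_distrib[symmetric])
    have B: "(49/25::real)^n * (25/49)^(9*n) = ((25/49)^8)^n"
    proof -
      have "(49/25::real)^n * (25/49)^(9*n) = (49/25)^n * (25/49)^n * ((25/49)^8)^n"
        by (simp add: power_mult[symmetric] power_add[symmetric])
      also have "(49/25::real)^n * (25/49)^n = 1" by (simp add: power_mult_distrib[symmetric])
      finally show ?thesis by simp
    qed
    have eq: "\<And>X Y Z a b::real. X*(Y*a)*(Z*b) = X*(Y*Z)*(a*b)" by (simp add: ac_simps)
    have "((121/9::real)^n)\<^sup>2 * ((49/25)^n * (25/24)) * ((25/49)^(9*n) * (49/24))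
       = (14641/81)^n * ((25/49)^8)^n * ((25/24) * (49/24))"
      by (subst eq) (simp only: A B)
    also have "\<dots> = (14641/81 * (25/49)^8) ^ n * (1225/576)"
      by (simp only: power_mult_distrib)
    finally show ?thesis .
  qed
  also have "\<dots> \<le> (exp (-1/10)) ^ n * 8190"
  proof (intro mult_mono power_mono)
    have "14641/81 * (25/49::real)^8 \<le> 9/10" by (simp add: power_divide)
    also have "(9/10::real) \<le> exp (-1/10)" using exp_ge_add_one_self[of "-1/10::real"] by simp
    finally show "14641/81 * (25/49::real)^8 \<le> exp (-1/10)" .
  qed auto
  also have "\<dots> = 8190 * exp (- real n / 10)"
    by (simp add: exp_of_nat_mult[symmetric])
  finally show ?thesis .
qed




lemma main_HK:
  fixes a lam :: "nat \<Rightarrow> complex" and n N :: nat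
  assumes lam: "\<forall>j<n. Re (lam j) \<le> 0" and N: "9*n \<le> N"
  defines "h \<equiv> \<lambda>t::real. (cmod (\<Sum>j<n. a j * exp (lam j * complex_of_real t)))\<^sup>2 * exp (-t)"
  shows "integral {0..real N} h \<le> (1 + 8190 * exp (- real n / 10)) * integral {0..real (9*n)} h"
proof -
  have cont: "continuous_on A h" for A unfolding h_def by (intro continuous_intros)
  have contk: "continuous_on A (\<lambda>\<sigma>. h (real k + \<sigma>))" for A k unfolding h_def by (intro continuous_intros)
  have hnn: "0 \<le> h t" for t unfolding h_def by simp
  define B where "B k = integral {0..1} (\<lambda>\<sigma>. h (real k + \<sigma>))" for k
  have Bnn: "0 \<le> B k" for k unfolding B_def by (intro integral_nonneg integrable_continuous_interval contk hnn)
  have blocks: "integral {0..real M} h = (\<Sum>k<M. B k)" for M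
  proof (induction M)
    case 0 show ?case by simp
  next
    case (Suc M)
    have "integral {0..real (Suc M)} h = integral {0..real M} h + integral {real M..real (Suc M)} h"
      by (rule Henstock_Kurzweil_Integration.integral_combine[symmetric]) (auto intro: integrable_continuous_interval cont)
    moreover have "integral {real M..real (Suc M)} h = B M"
      unfolding B_def using integral_shift_Icc_real[of 0 1 h "real M"] by (simp add: o_def add.commute)
    ultimately show ?case using Suc by simp
  qed
  define C where "C k = ((121/9)^n)\<^sup>2 * (\<Sum>i<n. ((7/5::real)^i)\<^sup>2) / ((7/5)^k)\<^sup>2" for k
  have Bk: "B k \<le> C k * (\<Sum>i<n. B i)" if "n \<le> k" for k
  proof -
    have "B k \<le> integral {0..1} (\<lambda>\<sigma>. C k * (\<Sum>i<n. h (real i + \<sigma>)))"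
      unfolding B_def
    proof (rule integral_le)
      show "(\<lambda>\<sigma>. h (real k + \<sigma>)) integrable_on {0..1}" by (intro integrable_continuous_interval contk)
      show "(\<lambda>\<sigma>. C k * (\<Sum>i<n. h (real i + \<sigma>))) integrable_on {0..1}"
        by (intro integrable_continuous_interval continuous_on_mult continuous_on_const continuous_on_sum contk)
      fix \<sigma> :: real
      show "h (real k + \<sigma>) \<le> C k * (\<Sum>i<n. h (real i + \<sigma>))"
        using pointwise[OF lam that, of a \<sigma>] unfolding h_def C_def by simp
    qed
    also have "\<dots> = C k * (\<Sum>i<n. B i)"
      unfolding B_def by (simp add: integral_sum integrable_continuous_interval contk)
    finally show ?thesis .
  qed
  define \<epsilon> where "\<epsilon> = 8190 * exp (- real n / 10)"
  have \<epsilon>: "(\<Sum>k\<in>{9*n..<N}. C k) \<le> \<epsilon>" unfolding C_def \<epsilon>_def by (rule numeric)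
  have U: "{..<N} = {..<9*n} \<union> {9*n..<N}" using N by auto
  have "(\<Sum>k<N. B k) = (\<Sum>k<9*n. B k) + (\<Sum>k\<in>{9*n..<N}. B k)"
    unfolding U by (rule sum.union_disjoint) auto
  then have Y: "integral {0..real N} h = (\<Sum>k<9*n. B k) + (\<Sum>k\<in>{9*n..<N}. B k)"
    by (simp only: blocks)
  have "(\<Sum>k\<in>{9*n..<N}. B k) \<le> (\<Sum>k\<in>{9*n..<N}. C k * (\<Sum>i<n. B i))"
    by (intro sum_mono Bk) auto
  also have "\<dots> = (\<Sum>k\<in>{9*n..<N}. C k) * (\<Sum>i<n. B i)" by (simp add: sum_distrib_right)
  also have "\<dots> \<le> \<epsilon> * (\<Sum>k<9*n. B k)"
  proof (rule mult_mono[OF \<epsilon>])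
    show "(\<Sum>i<n. B i) \<le> (\<Sum>k<9*n. B k)" by (intro sum_mono2) (auto simp: Bnn)
    show "0 \<le> \<epsilon>" by (simp add: \<epsilon>_def)
    show "0 \<le> (\<Sum>i<n. B i)" by (intro sum_nonneg Bnn)
  qed
  finally have X: "integral {0..real N} h \<le> (\<Sum>k<9*n. B k) + \<epsilon> * (\<Sum>k<9*n. B k)"
    using Y by linarith
  have "integral {0..real (9*n)} h = (\<Sum>k<9*n. B k)" by (rule blocks)
  with X show ?thesis unfolding \<epsilon>_def by (simp only: distrib_right mult_1_left)
qed

lemma main_L:
  fixes a lam :: "nat \<Rightarrow> complex" and n :: nat
  assumes lam: "\<forall>j<n. Re (lam j) \<le> 0"
  shows "(LINT t:{0..}|lborel. (cmod (\<Sum>j<n. a j * exp (lam j * complex_of_real t)))\<^sup>2 * exp (- t))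
             \<le> (1 + 8190 * exp (- real n / 10)) *
                (LINT t:{0..9 * real n}|lborel. (cmod (\<Sum>j<n. a j * exp (lam j * complex_of_real t)))\<^sup>2 * exp (- t))"
proof -
  define h where "h = (\<lambda>t::real. (cmod (\<Sum>j<n. a j * exp (lam j * complex_of_real t)))\<^sup>2 * exp (-t))"
  have cont: "continuous_on A h" for A unfolding h_def by (intro continuous_intros)
  have hnn: "0 \<le> h t" for t unfolding h_def by simp
  define \<epsilon> where "\<epsilon> = 8190 * exp (- real n / 10)"
  define I where "I = integral {0..real (9*n)} h"
  have I: "(LINT t:{0..9 * real n}|lborel. h t) = I"
    using set_borel_integral_eq_integral(2)[OF borel_integrable_atLeastAtMost'[OF cont]] by (simp add: I_def)
  have Inn: "0 \<le> I" unfolding I_def by (intro integral_nonneg integrable_continuous_interval cont hnn)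
  have "(LINT t:{0..}|lborel. h t) \<le> (1 + \<epsilon>) * I"
  proof (cases "set_integrable lborel {0..} h")
    case True
    have lim: "((\<lambda>b. LINT t:{0..b}|lborel. h t) \<longlongrightarrow> (LINT t:{0..}|lborel. h t)) at_top"
      by (rule tendsto_set_lebesgue_integral_at_top[OF _ True]) auto
    have ev: "eventually (\<lambda>b. (LINT t:{0..b}|lborel. h t) \<le> (1 + \<epsilon>) * I) at_top"
      using eventually_ge_at_top[of "real (9*n)"]
    proof eventually_elim
      case (elim b)
      define N where "N = nat \<lceil>b\<rceil>"
      have bN: "b \<le> real N" unfolding N_def by linarith
      have nN: "9 * n \<le> N" using elim unfolding N_def by linarith
      have "(LINT t:{0..b}|lborel. h t) = integral {0..b} h"
        using set_borel_integral_eq_integral(2)[OF borel_integrable_atLeastAtMost'[OF cont]] by simp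
      also have "\<dots> \<le> integral {0..real N} h"
        using bN by (intro integral_subset_le integrable_continuous_interval cont) (auto simp: hnn)
      also have "\<dots> \<le> (1 + \<epsilon>) * I"
        unfolding h_def I_def \<epsilon>_def by (rule main_HK[OF lam nN])
      finally show ?case .
    qed
    show ?thesis by (rule tendsto_upperbound[OF lim ev]) simp
  next
    case False
    then have "(LINT t:{0..}|lborel. h t) = 0"
      unfolding set_lebesgue_integral_def set_integrable_def by (simp add: not_integrable_integral_eq)
    then show ?thesis using Inn by (simp add: \<epsilon>_def)
  qed
  then show ?thesis using I unfolding h_def \<epsilon>_def by simp
qed


theorem theorem3p1:
  shows "(\<forall>(n::nat) \<ge> 1. \<forall>f \<in> E_minus n.
           (LINT t:{0..}|lborel. (cmod (f t))\<^sup>2 * exp (- t))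
             \<le> (1 + 8190 * exp (- real n / 10)) *
                (LINT t:{0..9 * real n}|lborel. (cmod (f t))\<^sup>2 * exp (- t)))
       \<and> (\<forall>(n::nat) \<ge> 1. \<forall>f \<in> T_class n.
           (LINT t:{0..}|lborel. (cmod (f t))\<^sup>2 * exp (- t))
             \<le> (1 + 8190 * exp (- real n / 10)) *
                (LINT t:{0..9 * real n}|lborel. (cmod (f t))\<^sup>2 * exp (- t)))"
  proof (intro conjI allI impI ballI)
  fix n :: nat and f
  assume "1 \<le> n" "f \<in> E_minus n"
  then obtain a lam where lam: "\<forall>j<n. Re (lam j) \<le> 0"
    and f: "f = (\<lambda>t. \<Sum>j<n. a j * exp (lam j * complex_of_real t))"
    unfolding E_minus_def by blast
  show "(LINT t:{0..}|lborel. (cmod (f t))\<^sup>2 * exp (- t))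
             \<le> (1 + 8190 * exp (- real n / 10)) *
                (LINT t:{0..9 * real n}|lborel. (cmod (f t))\<^sup>2 * exp (- t))"
    unfolding f using main_L[OF lam, of a] by simp
next
  fix n :: nat and f
  assume "1 \<le> n" "f \<in> T_class n"
  then obtain a and lam :: "nat \<Rightarrow> real"
    where f: "f = (\<lambda>t. \<Sum>j<n. a j * exp (\<i> * complex_of_real (lam j) * complex_of_real t))"
    unfolding T_class_def by blast
  have lam: "\<forall>j<n. Re (\<i> * complex_of_real (lam j)) \<le> 0" by simp
  show "(LINT t:{0..}|lborel. (cmod (f t))\<^sup>2 * exp (- t))
             \<le> (1 + 8190 * exp (- real n / 10)) *
                (LINT t:{0..9 * real n}|lborel. (cmod (f t))\<^sup>2 * exp (- t))"
    unfolding f using main_L[OF lam, of a] by simp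
qed

end
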